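(* Let $u(x)$ be a real-analytic function near $0$ in $\mathbb{R}^n$ such that its Hessian $Hu=(u_{ij})$ has rank one at every point near $0$ and $u_{11}(0)\neq0$. Then, for all $x$ near $0$ and every multi-index $I\in\mathbb{Z}_+^n$, the vector $u_{xx^I}(x)$ belongs to the span of the vectors $u_{x(x^1)^m}(x)$, $0\le m\le|I|$.
   Context: For $I=(I_1,\dots,I_n)\in\mathbb{Z}_+^n$ (nonnegative integers), $|I|=I_1+\dots+I_n$, and $u_{xx^I}$ denotes the vector $\partial^I\nabla u=\big(\partial_{x^1}^{I_1}\cdots\partial_{x^n}^{I_n}\partial_{x^j}u\big)_{j=1,\dots,n}\in\mathbb{R}^n$; $u_{x(x^1)^m}=\partial_{x^1}^m\nabla u$. *)

theory Defs
  imports "HOL-Analysis.Analysis"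
begin

definition monomial_at :: "real^'n \<Rightarrow> ('n \<Rightarrow> nat) \<Rightarrow> real^'n \<Rightarrow> real" where
  "monomial_at a I x = (\<Prod>i\<in>UNIV. (x $ i - a $ i) ^ I i)"

text \<open>Real analyticity at a point: near a, u is the sum of an (unconditionally,
  i.e. absolutely) convergent power series in x - a.\<close>
definition real_analytic_at :: "(real^'n \<Rightarrow> real) \<Rightarrow> real^'n \<Rightarrow> bool" where
  "real_analytic_at u a \<longleftrightarrow>
     (\<exists>r>0. \<exists>c :: ('n \<Rightarrow> nat) \<Rightarrow> real.
        \<forall>x\<in>ball a r. ((\<lambda>I. c I * monomial_at a I x) has_sum u x) UNIV)"

definition real_analytic_near :: "(real^'n \<Rightarrow> real) \<Rightarrow> real^'n \<Rightarrow> bool" where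
  "real_analytic_near u a \<longleftrightarrow> (\<exists>U. open U \<and> a \<in> U \<and> (\<forall>y\<in>U. real_analytic_at u y))"

definition pd :: "'n \<Rightarrow> (real^'n \<Rightarrow> real) \<Rightarrow> real^'n \<Rightarrow> real" where
  "pd i f x = deriv (\<lambda>t. f (x + t *\<^sub>R axis i 1)) 0"

fun pdl :: "'n list \<Rightarrow> (real^'n \<Rightarrow> real) \<Rightarrow> real^'n \<Rightarrow> real" where
  "pdl [] f = f"
| "pdl (i # is) f = pd i (pdl is f)"

text \<open>The partial derivative operator of a multi-index I: differentiate I i times in
  coordinate i (in some fixed order; for analytic functions the order is irrelevant).\<close>
definition pdI :: "('n::finite \<Rightarrow> nat) \<Rightarrow> (real^'n \<Rightarrow> real) \<Rightarrow> real^'n \<Rightarrow> real" where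
  "pdI I f = pdl (SOME xs. \<forall>i. count_list xs i = I i) f"

definition mi_abs :: "('n::finite \<Rightarrow> nat) \<Rightarrow> nat" where
  "mi_abs I = (\<Sum>i\<in>UNIV. I i)"

text \<open>Gradient-valued derivatives: u_{xx^I}(x) = (\<partial>^I \<partial>_j u (x))_j.\<close>
definition grad_pdI :: "('n::finite \<Rightarrow> nat) \<Rightarrow> (real^'n \<Rightarrow> real) \<Rightarrow> real^'n \<Rightarrow> real^'n" where
  "grad_pdI I u x = (\<chi> j. pdI I (pd j u) x)"

definition hessian :: "(real^'n \<Rightarrow> real) \<Rightarrow> real^'n \<Rightarrow> real^'n^'n" where
  "hessian u x = (\<chi> i j. pd i (pd j u) x)"

end

theory Submission
  imports Defs
begin

definition PS :: "real \<Rightarrow> (('n::finite \<Rightarrow> nat) \<Rightarrow> real) \<Rightarrow> (real^'n \<Rightarrow> real) \<Rightarrow> bool" where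
  "PS r c f \<longleftrightarrow> (\<forall>y\<in>ball 0 r. ((\<lambda>I. c I * monomial_at 0 I y) has_sum f y) UNIV)"

lemma sq_pow_bound:
  fixes K s :: real
  assumes "0 \<le> K" "K < s"
  shows "\<exists>C. \<forall>p. real p * real p * K ^ p \<le> C * s ^ p"
proof -
  have s0: "s > 0" using assms by linarith
  define q where "q = sqrt (K / s)"
  have q0: "0 \<le> q" and q1: "q < 1" using assms s0 by (auto simp: q_def)
  have "(\<lambda>n. of_nat n * q ^ n) \<longlonglongrightarrow> (0::real)"
    using q0 q1 by (intro powser_times_n_limit_0) simp
  then have "Bseq (\<lambda>n. of_nat n * q ^ n)" by (rule convergent_imp_Bseq[OF convergentI])
  then obtain B where B: "B > 0" "\<And>n. norm (of_nat n * q ^ n) \<le> B" by (auto simp: Bseq_def)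
  have "real p * real p * K ^ p \<le> B^2 * s ^ p" for p
  proof -
    have qq: "q^2 = K / s" using assms s0 by (simp add: q_def)
    have "K ^ p = (q^2)^p * s^p" using s0 by (simp add: qq power_divide)
    then have "real p * real p * K ^ p = (real p * q ^ p)^2 * s ^ p"
      by (simp add: power_mult_distrib power_mult[symmetric] mult.commute power2_eq_square)
    also have "\<dots> \<le> B^2 * s^p"
    proof (rule mult_right_mono)
      have "\<bar>real p * q ^ p\<bar> \<le> B" using B(2)[of p] by simp
      then show "(real p * q ^ p)\<^sup>2 \<le> B\<^sup>2"
        by (metis abs_ge_zero abs_le_square_iff abs_of_nonneg B(1) less_imp_le order_trans)
    qed (use s0 in simp)
    finally show ?thesis .
  qed
  then show ?thesis by blast
qed

lemma pow_bound1:
  fixes K s a C :: real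
  assumes "0 < K" "\<bar>a\<bar> \<le> K" "\<And>p. real p * real p * K ^ p \<le> C * s ^ p"
  shows "real p * \<bar>a\<bar> ^ (p - 1) \<le> C / K * s ^ p"
proof (cases p)
  case 0
  with assms(3)[of 0] show ?thesis using assms(1) by simp
next
  case (Suc n)
  have "real p * \<bar>a\<bar> ^ (p - 1) \<le> real p * K ^ n"
    using Suc assms(2) by (simp add: power_mono)
  also have "\<dots> \<le> real p * real p * K ^ n"
    using Suc assms(1) by (simp add: mult_right_mono)
  also have "\<dots> = real p * real p * K ^ p / K"
    using Suc assms(1) by simp
  also have "\<dots> \<le> C * s ^ p / K"
    using assms(3)[of p] assms(1) by (simp add: divide_right_mono)
  finally show ?thesis by simp
qed

lemma pow_bound2:
  fixes K s C :: real
  assumes "0 < K" "\<And>p. real p * real p * K ^ p \<le> C * s ^ p" "0 \<le> s"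
  shows "real p * real (p - 1) * K ^ (p - 2) \<le> C / K^2 * s ^ p"
proof (cases "p < 2")
  case True
  then have "real p * real (p - 1) = 0" by (cases p) auto
  moreover have "0 \<le> C" using assms(2)[of 0] by simp
  moreover have "0 \<le> s ^ p"
    using assms(3) by simp
  ultimately show ?thesis using assms(1) by (metis mult_zero_left divide_nonneg_pos zero_less_power mult_nonneg_nonneg times_divide_eq_left)
next
  case False
  then obtain n where n: "p = n + 2" by (metis add.commute le_Suc_ex not_less)
  have "real p * real (p - 1) * K ^ (p - 2) \<le> real p * real p * K ^ n"
  proof -
    have "p - 2 = n" using n by simp
    then show ?thesis using n assms(1) by (simp add: mult_right_mono mult_left_mono)
  qed
  also have "\<dots> = real p * real p * K ^ p / K^2"
    using n assms(1) by (simp add: power_add power2_eq_square)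
  also have "\<dots> \<le> C * s ^ p / K^2"
    using assms(2)[of p] assms(1) by (simp add: divide_right_mono)
  finally show ?thesis by simp
qed

lemma mono_split:
  fixes y :: "real^'n::finite"
  shows "monomial_at 0 I y = (y$i)^(I i) * (\<Prod>l\<in>UNIV-{i}. (y$l)^(I l))"
  unfolding monomial_at_def by (simp add: prod.remove)

lemma mono_shift:
  fixes y :: "real^'n::finite"
  shows "monomial_at 0 I (y + t *\<^sub>R axis i 1) = (y$i + t)^(I i) * (\<Prod>l\<in>UNIV-{i}. (y$l)^(I l))"
  unfolding mono_split[of _ _ i] by (auto simp: axis_def intro!: prod.cong)

lemma PS_line_deriv:
  fixes f :: "real^'n::finite \<Rightarrow> real" and i :: 'n
  assumes PS: "PS r c f" and y: "y \<in> ball 0 r"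
  defines "m \<equiv> \<lambda>I. \<Prod>l\<in>UNIV-{i}. (y$l)^(I l)"
  shows "(\<lambda>I. c I * (real (I i) * (y$i)^(I i - 1) * m I)) summable_on UNIV \<and>
         ((\<lambda>t. f (y + t *\<^sub>R axis i 1)) has_real_derivative
            (\<Sum>\<^sub>\<infinity>I. c I * (real (I i) * (y$i)^(I i - 1) * m I))) (at 0)"
proof -
  define a where "a = y$i"
  define \<epsilon> where "\<epsilon> = (r - norm y)/2"
  have \<epsilon>: "\<epsilon> > 0" using y by (simp add: \<epsilon>_def)
  define \<sigma> where "\<sigma> = \<bar>a\<bar> + \<epsilon>"
  define K where "K = \<bar>a\<bar> + \<epsilon>/2"
  have K0: "K > 0" using \<epsilon> by (simp add: K_def add_nonneg_pos)
  have K\<sigma>: "K < \<sigma>" using \<epsilon> by (simp add: K_def \<sigma>_def)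
  have \<sigma>0: "\<sigma> > 0" using K0 K\<sigma> by linarith
  define w where "w = (\<chi> l. \<bar>y$l\<bar>) + \<epsilon> *\<^sub>R axis i 1"
  have nw: "norm (\<chi> l. \<bar>y$l\<bar>) = norm y" by (simp add: norm_vec_def)
  have "norm w \<le> norm y + \<epsilon>" unfolding w_def
    using norm_triangle_ineq[of "(\<chi> l. \<bar>y$l\<bar>)" "\<epsilon> *\<^sub>R axis i 1"] nw \<epsilon> by simp
  moreover have "norm y < r" using y by simp
  ultimately have "norm w < r" unfolding \<epsilon>_def by (simp add: field_simps)
  then have wb: "w \<in> ball 0 r" by simp
  have mw: "monomial_at 0 I w = \<sigma>^(I i) * \<bar>m I\<bar>" for I
  proof -
    have "monomial_at 0 I w = (w$i)^(I i) * (\<Prod>l\<in>UNIV-{i}. (w$l)^(I l))" by (rule mono_split)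
    also have "(\<Prod>l\<in>UNIV-{i}. (w$l)^(I l)) = \<bar>m I\<bar>"
      unfolding m_def abs_prod by (intro prod.cong refl) (simp add: w_def power_abs axis_def)
    finally show ?thesis using \<epsilon> by (simp add: w_def \<sigma>_def a_def)
  qed
  define G where "G I = \<bar>c I\<bar> * (\<sigma>^(I i) * \<bar>m I\<bar>)" for I
  have G0: "G I \<ge> 0" for I using \<sigma>0 by (simp add: G_def)
  have Gs: "G summable_on UNIV"
  proof -
    have "((\<lambda>I. c I * monomial_at 0 I w) has_sum f w) UNIV"
      using PS wb unfolding PS_def by (rule bspec)
    then have "(\<lambda>I. c I * monomial_at 0 I w) summable_on UNIV"
      unfolding summable_on_def by (rule exI)
    then have "(\<lambda>I. norm (c I * monomial_at 0 I w)) summable_on UNIV"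
      by (rule summable_on_iff_abs_summable_on_real[THEN iffD1])
    moreover have "norm (c I * monomial_at 0 I w) = G I" for I
      using \<sigma>0 by (simp add: mw G_def abs_mult)
    ultimately show ?thesis by simp
  qed
  define SG where "SG = infsum G UNIV"
  have hG: "(G has_sum SG) UNIV" using Gs SG_def by simp
  obtain C where C: "\<And>p. real p * real p * K^p \<le> C * \<sigma>^p"
    using sq_pow_bound[of K \<sigma>] K0 K\<sigma> by auto
  have C0: "C \<ge> 0" using C[of 0] by simp
  define D where "D I = c I * (real (I i) * a^(I i - 1) * m I)" for I
  have Db: "norm (D I) \<le> norm (C / K * G I)" for I
  proof -
    have "norm (D I) = \<bar>c I\<bar> * ((real (I i) * \<bar>a\<bar>^(I i - 1)) * \<bar>m I\<bar>)"
      by (simp add: D_def abs_mult power_abs)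
    also have "\<dots> \<le> \<bar>c I\<bar> * ((C / K * \<sigma> ^ (I i)) * \<bar>m I\<bar>)"
      using pow_bound1[OF K0 _ C, of a "I i"] \<epsilon> by (intro mult_left_mono mult_right_mono) (auto simp: K_def)
    also have "\<dots> = norm (C / K * G I)"
      using C0 K0 \<sigma>0 by (simp add: G_def abs_mult)
    finally show ?thesis .
  qed
  have Ds: "D summable_on UNIV"
  proof (rule summable_on_iff_abs_summable_on_real[THEN iffD2])
    have "(\<lambda>I. C / K * G I) summable_on UNIV" using Gs by (rule summable_on_cmult_right)
    then have "(\<lambda>I. norm (C / K * G I)) summable_on UNIV"
      by (rule summable_on_iff_abs_summable_on_real[THEN iffD1])
    then show "(\<lambda>I. norm (D I)) summable_on UNIV"
      by (rule Infinite_Sum.abs_summable_on_comparison_test) (rule Db)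
  qed
  define S where "S = infsum D UNIV"
  have hD: "(D has_sum S) UNIV" using Ds S_def by simp
  define F where "F t = f (y + t *\<^sub>R axis i 1)" for t
  have F0: "F 0 = f y" by (simp add: F_def)
  have hy: "((\<lambda>I. c I * (a^(I i) * m I)) has_sum f y) UNIV"
  proof -
    have "((\<lambda>I. c I * monomial_at 0 I y) has_sum f y) UNIV"
      using PS y unfolding PS_def by (rule bspec)
    then show ?thesis by (simp add: mono_split[of _ y i] a_def m_def)
  qed
  have est: "norm ((F t - F 0) / (t - 0) - S) \<le> \<bar>t\<bar> * (C / K^2 * SG)"
    if t: "t \<noteq> 0" "\<bar>t\<bar> < \<epsilon>/2" for t
  proof -
    have "norm (y + t *\<^sub>R axis i 1) \<le> norm y + \<bar>t\<bar>"
      using norm_triangle_ineq[of y "t *\<^sub>R axis i 1"] by simp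
    then have yt: "y + t *\<^sub>R axis i 1 \<in> ball 0 r" using t \<epsilon> by (simp add: \<epsilon>_def)
    have ht: "((\<lambda>I. c I * ((a + t)^(I i) * m I)) has_sum F t) UNIV"
    proof -
      have "((\<lambda>I. c I * monomial_at 0 I (y + t *\<^sub>R axis i 1)) has_sum F t) UNIV"
        using PS yt unfolding PS_def F_def by (rule bspec)
      then show ?thesis by (simp add: mono_shift a_def m_def)
    qed
    define T where "T I = c I * ((a + t)^(I i) * m I) / t - c I * (a^(I i) * m I) / t - D I" for I
    have hT: "(T has_sum ((F t - F 0) / (t - 0) - S)) UNIV"
    proof -
      have "((\<lambda>I. c I * ((a + t)^(I i) * m I) / t + (- (c I * (a^(I i) * m I) / t)) + (- D I))
              has_sum (F t / t + (- (f y / t)) + (- S))) UNIV"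
      proof (intro has_sum_add)
        show "((\<lambda>I. c I * ((a + t)^(I i) * m I) / t) has_sum (F t / t)) UNIV"
          by (rule has_sum_divide_const[OF ht])
        show "((\<lambda>I. - (c I * (a^(I i) * m I) / t)) has_sum (- (f y / t))) UNIV"
          unfolding has_sum_uminus by simp (rule has_sum_divide_const[OF hy])
        show "((\<lambda>I. - D I) has_sum (- S)) UNIV"
          unfolding has_sum_uminus by simp (rule hD)
      qed
      then show ?thesis by (simp add: T_def[abs_def] F0 diff_divide_distrib)
    qed
    have Tb: "norm (T I) \<le> \<bar>t\<bar> * (C / K^2) * G I" for I
    proof -
      have "T I = c I * m I * (((a + t)^(I i) - a^(I i)) / t - real (I i) * a^(I i - 1))"
        by (simp add: T_def D_def algebra_simps diff_divide_distrib)
      then have "norm (T I) = \<bar>c I\<bar> * \<bar>m I\<bar> * norm (((a + t)^(I i) - a^(I i)) / t - real (I i) * a^(I i - Suc 0))"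
        by (simp add: abs_mult)
      also have "\<dots> \<le> \<bar>c I\<bar> * \<bar>m I\<bar> * (real (I i) * real (I i - Suc 0) * K ^ (I i - 2) * norm t)"
        using t by (intro mult_left_mono lemma_termdiff3) (auto simp: K_def)
      also have "\<dots> \<le> \<bar>c I\<bar> * \<bar>m I\<bar> * (C / K^2 * \<sigma> ^ (I i) * \<bar>t\<bar>)"
      proof (rule mult_left_mono)
        have "real (I i) * real (I i - Suc 0) * K ^ (I i - 2) \<le> C / K^2 * \<sigma> ^ (I i)"
          using pow_bound2[OF K0 C, of "I i"] \<sigma>0 by simp
        then show "real (I i) * real (I i - Suc 0) * K ^ (I i - 2) * norm t \<le> C / K^2 * \<sigma> ^ (I i) * \<bar>t\<bar>"
          using mult_right_mono[OF _ abs_ge_zero[of t]] by (metis real_norm_def times_divide_eq_left)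
      qed simp
      also have "\<dots> = \<bar>t\<bar> * (C / K^2) * G I" by (simp add: G_def)
      finally show ?thesis .
    qed
    have "((\<lambda>I. \<bar>t\<bar> * (C / K^2) * G I) has_sum (\<bar>t\<bar> * (C / K^2) * SG)) UNIV"
      by (intro has_sum_cmult_right hG)
    from norm_infsum_le[OF hT this Tb] show ?thesis by simp
  qed
  have "((\<lambda>t. (F t - F 0) / (t - 0) - S) \<longlongrightarrow> 0) (at 0)"
  proof (rule Lim_null_comparison)
    show "\<forall>\<^sub>F t in at 0. norm ((F t - F 0) / (t - 0) - S) \<le> \<bar>t\<bar> * (C / K^2 * SG)"
      unfolding eventually_at using \<epsilon> est by (intro exI[of _ "\<epsilon>/2"]) (auto simp: dist_real_def)
    show "((\<lambda>t. \<bar>t\<bar> * (C / K^2 * SG)) \<longlongrightarrow> 0) (at 0)"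
    proof -
      have "((\<lambda>t::real. \<bar>t\<bar>) \<longlongrightarrow> 0) (at 0)"
        using tendsto_rabs_zero[OF tendsto_ident_at[of 0 UNIV]] by simp
      from tendsto_mult[OF this tendsto_const[of "C / K^2 * SG"]] show ?thesis by simp
    qed
  qed
  then have "(F has_real_derivative S) (at 0)"
    unfolding has_field_derivative_iff by (simp add: Lim_null[symmetric])
  then show ?thesis using Ds unfolding S_def D_def F_def a_def by simp
qed

definition dc :: "'n \<Rightarrow> (('n \<Rightarrow> nat) \<Rightarrow> real) \<Rightarrow> ('n \<Rightarrow> nat) \<Rightarrow> real" where
  "dc i c J = c (J(i := Suc (J i))) * real (Suc (J i))"

lemma PS_pd:
  fixes f :: "real^'n::finite \<Rightarrow> real" and i :: 'n
  assumes PS: "PS r c f" and y: "y \<in> ball 0 r"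
  shows "((\<lambda>t. f (y + t *\<^sub>R axis i 1)) has_real_derivative pd i f y) (at 0)"
    and "((\<lambda>J. dc i c J * monomial_at 0 J y) has_sum pd i f y) UNIV"
proof -
  define m where "m \<equiv> \<lambda>I. \<Prod>l\<in>UNIV-{i}. (y$l)^(I l)"
  define D where "D I = c I * (real (I i) * (y$i)^(I i - 1) * m I)" for I
  have A: "D summable_on UNIV"
     "((\<lambda>t. f (y + t *\<^sub>R axis i 1)) has_real_derivative infsum D UNIV) (at 0)"
    using PS_line_deriv[OF PS y, of i] unfolding D_def[abs_def] m_def by auto
  have pdf: "pd i f y = infsum D UNIV"
    unfolding pd_def using A(2) by (rule DERIV_imp_deriv)
  then show "((\<lambda>t. f (y + t *\<^sub>R axis i 1)) has_real_derivative pd i f y) (at 0)"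
    using A(2) by simp
  define h :: "('n \<Rightarrow> nat) \<Rightarrow> ('n \<Rightarrow> nat)" where "h J = J(i := Suc (J i))" for J
  have inj: "inj_on h UNIV"
  proof (rule inj_onI)
    fix J1 J2 assume "h J1 = h J2"
    then have "\<forall>l. (h J1) l = (h J2) l" by simp
    then show "J1 = J2" unfolding h_def by (metis fun_upd_apply nat.inject ext)
  qed
  have hD: "(D has_sum pd i f y) UNIV" using A(1) pdf by simp
  have "(D has_sum pd i f y) (h ` UNIV)"
  proof -
    have "(D has_sum pd i f y) UNIV \<longleftrightarrow> (D has_sum pd i f y) (h ` UNIV)"
    proof (rule has_sum_cong_neutral)
      fix I assume "I \<in> UNIV - h ` UNIV"
      then have "I i = 0"
      proof (cases "I i")
        case (Suc n)
        then have "I = h (I(i := n))" unfolding h_def by (auto simp: fun_eq_iff)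
        then show ?thesis using \<open>I \<in> UNIV - h ` UNIV\<close> by auto
      qed
      then show "D I = 0" by (simp add: D_def)
    qed auto
    then show ?thesis using hD by simp
  qed
  then have "((D \<circ> h) has_sum pd i f y) UNIV" using has_sum_reindex[OF inj] by blast
  moreover have "(D \<circ> h) J = dc i c J * monomial_at 0 J y" for J
  proof -
    have "m (h J) = m J" unfolding m_def h_def by (intro prod.cong) auto
    then show ?thesis
      by (simp add: D_def dc_def mono_split[of J y i] h_def) (simp add: m_def)
  qed
  ultimately show "((\<lambda>J. dc i c J * monomial_at 0 J y) has_sum pd i f y) UNIV"
    by (simp add: comp_def)
qed

lemma PS_pd': "PS r c f \<Longrightarrow> PS r (dc i c) (pd i f)"
  using PS_pd(2) unfolding PS_def by blast

fun dcl :: "'n list \<Rightarrow> (('n \<Rightarrow> nat) \<Rightarrow> real) \<Rightarrow> ('n \<Rightarrow> nat) \<Rightarrow> real" where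
  "dcl [] c = c"
| "dcl (i # is) c = dc i (dcl is c)"

lemma PS_pdl: "PS r c f \<Longrightarrow> PS r (dcl xs c) (pdl xs f)"
  by (induction xs) (simp_all add: PS_pd')

lemma dcl_formula:
  fixes c :: "('n::finite \<Rightarrow> nat) \<Rightarrow> real"
  shows "dcl xs c J = c (\<lambda>l. J l + count_list xs l) *
     (\<Prod>l\<in>UNIV. real (fact (J l + count_list xs l)) / real (fact (J l)))"
proof (induction xs arbitrary: J)
  case Nil
  then show ?case by simp
next
  case (Cons i xs)
  define J' where "J' = J(i := Suc (J i))"
  have arg: "(\<lambda>l. J' l + count_list xs l) = (\<lambda>l. J l + count_list (i # xs) l)"
    unfolding J'_def by (rule ext) simp
  have "(\<Prod>l\<in>UNIV. real (fact (J' l + count_list xs l)) / real (fact (J' l))) * real (Suc (J i))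
      = (\<Prod>l\<in>UNIV. real (fact (J l + count_list (i # xs) l)) / real (fact (J l)))"
  proof -
    have r: "(\<Prod>l\<in>UNIV-{i}. real (fact (J' l + count_list xs l)) / real (fact (J' l)))
        = (\<Prod>l\<in>UNIV-{i}. real (fact (J l + count_list (i # xs) l)) / real (fact (J l)))"
    proof (rule prod.cong)
      fix l assume "l \<in> UNIV - {i}"
      then have "J' l = J l" "count_list (i # xs) l = count_list xs l" by (auto simp: J'_def)
      then show "real (fact (J' l + count_list xs l)) / real (fact (J' l)) = real (fact (J l + count_list (i # xs) l)) / real (fact (J l))"
        by simp
    qed simp
    have a: "real (fact (J' i + count_list xs i)) / real (fact (J' i)) * real (Suc (J i))
        = real (fact (J i + count_list (i # xs) i)) / real (fact (J i))"
    proof -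
      have e: "J' i + count_list xs i = J i + count_list (i # xs) i" by (simp add: J'_def)
      have f: "real (fact (J' i)) = real (Suc (J i)) * real (fact (J i))"
        by (simp add: J'_def del: of_nat_Suc) (simp add: algebra_simps)
      show ?thesis unfolding e f by (simp del: of_nat_Suc)
    qed
    have p1: "(\<Prod>l\<in>UNIV. real (fact (J' l + count_list xs l)) / real (fact (J' l)))
       = real (fact (J' i + count_list xs i)) / real (fact (J' i)) * (\<Prod>l\<in>UNIV-{i}. real (fact (J' l + count_list xs l)) / real (fact (J' l)))"
      by (rule prod.remove) simp_all
    have p2: "(\<Prod>l\<in>UNIV. real (fact (J l + count_list (i # xs) l)) / real (fact (J l)))
       = real (fact (J i + count_list (i # xs) i)) / real (fact (J i)) * (\<Prod>l\<in>UNIV-{i}. real (fact (J l + count_list (i # xs) l)) / real (fact (J l)))"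
      by (rule prod.remove) simp_all
    show ?thesis unfolding p1 p2 r a[symmetric] by (simp only: mult_ac)
  qed
  then show ?case
    by (simp add: dc_def Cons J'_def[symmetric] arg del: of_nat_Suc)
qed

lemma pdl_perm:
  assumes "PS r c f" "\<And>l. count_list xs l = count_list ys l" "y \<in> ball 0 r"
  shows "pdl xs f y = pdl ys f y"
proof -
  have "dcl xs c = dcl ys c" by (rule ext) (simp add: dcl_formula assms(2))
  moreover have "((\<lambda>I. dcl xs c I * monomial_at 0 I y) has_sum pdl xs f y) UNIV"
    using PS_pdl[OF assms(1), of xs] assms(3) unfolding PS_def by (rule bspec)
  moreover have "((\<lambda>I. dcl ys c I * monomial_at 0 I y) has_sum pdl ys f y) UNIV"
    using PS_pdl[OF assms(1), of ys] assms(3) unfolding PS_def by (rule bspec)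
  ultimately show ?thesis using has_sum_unique by metis
qed

definition LD :: "'n \<Rightarrow> (real^'n \<Rightarrow> real) \<Rightarrow> real^'n \<Rightarrow> real \<Rightarrow> bool" where
  "LD i f y D \<longleftrightarrow> ((\<lambda>t. f (y + t *\<^sub>R axis i 1)) has_real_derivative D) (at 0)"

lemma LD_pd: "LD i f y D \<Longrightarrow> pd i f y = D"
  unfolding LD_def pd_def by (rule DERIV_imp_deriv)

lemma LD_PS: "PS r c f \<Longrightarrow> y \<in> ball 0 r \<Longrightarrow> LD i f y (pd i f y)"
  unfolding LD_def by (rule PS_pd(1))

lemma LD_mult:
  assumes "LD i f y a" "LD i g y b"
  shows "LD i (\<lambda>z. f z * g z) y (a * g y + f y * b)"
  using DERIV_mult[OF assms[unfolded LD_def]] unfolding LD_def by (simp add: mult.commute)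

lemma LD_add:
  assumes "LD i f y a" "LD i g y b"
  shows "LD i (\<lambda>z. f z + g z) y (a + b)"
  using DERIV_add[OF assms[unfolded LD_def]] unfolding LD_def by simp

lemma LD_sum_list:
  assumes "\<And>x. x \<in> set W \<Longrightarrow> LD i (F x) y (D x)"
  shows "LD i (\<lambda>z. \<Sum>x\<leftarrow>W. F x z) y (\<Sum>x\<leftarrow>W. D x)"
  using assms
proof (induction W)
  case Nil
  then show ?case unfolding LD_def by simp
next
  case (Cons w W)
  then show ?case using LD_add[of i "F w" y "D w" "\<lambda>z. \<Sum>x\<leftarrow>W. F x z"] by simp
qed

lemma pd_local:
  fixes f g :: "real^'n::finite \<Rightarrow> real"
  assumes "open V" "y \<in> V" "\<And>z. z \<in> V \<Longrightarrow> f z = g z"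
  shows "pd i f y = pd i g y"
  unfolding pd_def
proof (rule deriv_cong_ev)
  have "((\<lambda>t. y + t *\<^sub>R axis i 1) \<longlongrightarrow> y + 0 *\<^sub>R axis i (1::real)) (nhds 0)"
    by (intro tendsto_intros) (simp add: tendsto_ident_at filterlim_ident)
  then have "((\<lambda>t. y + t *\<^sub>R axis i 1) \<longlongrightarrow> y) (nhds 0)" by simp
  then have "\<forall>\<^sub>F t in nhds 0. y + t *\<^sub>R axis i 1 \<in> V"
    using assms(1,2) unfolding tendsto_def by blast
  then show "\<forall>\<^sub>F t in nhds 0. f (y + t *\<^sub>R axis i 1) = g (y + t *\<^sub>R axis i 1)"
    by eventually_elim (rule assms(3))
qed simp

lemma pdl_local:
  fixes f g :: "real^'n::finite \<Rightarrow> real"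
  assumes "open V" "\<And>z. z \<in> V \<Longrightarrow> f z = g z" "y \<in> V"
  shows "pdl xs f y = pdl xs g y"
  using assms(3)
proof (induction xs arbitrary: y)
  case Nil
  then show ?case using assms(2) by simp
next
  case (Cons i xs)
  then show ?case using pd_local[OF assms(1) Cons(2), of "pdl xs f" "pdl xs g" i] by simp
qed

lemma leibniz:
  fixes a :: "real^'n::finite \<Rightarrow> real"
  assumes Pa: "PS r ca a"
  shows "\<exists>W. (\<forall>p\<in>set W. mset (fst p) \<subset># mset xs \<and> (\<exists>cw. PS r cw (snd p))) \<and>
     (\<forall>g cg. PS r cg g \<longrightarrow> (\<forall>y\<in>ball 0 r.
        pdl xs (\<lambda>z. a z * g z) y = a y * pdl xs g y + (\<Sum>p\<leftarrow>W. snd p y * pdl (fst p) g y)))"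
proof (induction xs)
  case Nil
  show ?case by (rule exI[of _ "[]"]) simp
next
  case (Cons i xs)
  then obtain W where W1: "\<forall>p\<in>set W. mset (fst p) \<subset># mset xs \<and> (\<exists>cw. PS r cw (snd p))"
    and W2: "\<And>g cg y. PS r cg g \<Longrightarrow> y\<in>ball 0 r \<Longrightarrow>
        pdl xs (\<lambda>z. a z * g z) y = a y * pdl xs g y + (\<Sum>p\<leftarrow>W. snd p y * pdl (fst p) g y)"
    by blast
  define W' where "W' = (xs, pd i a) # map (\<lambda>p. (fst p, pd i (snd p))) W @ map (\<lambda>p. (i # fst p, snd p)) W"
  show ?case
  proof (rule exI[of _ W'], rule conjI; (intro allI impI ballI)?)
    fix p assume "p \<in> set W'"
    then consider "p = (xs, pd i a)" | q where "q \<in> set W" "p = (fst q, pd i (snd q))"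
      | q where "q \<in> set W" "p = (i # fst q, snd q)"
      unfolding W'_def by auto
    then show "mset (fst p) \<subset># mset (i # xs) \<and> (\<exists>cw. PS r cw (snd p))"
    proof cases
      case 1
      then show ?thesis using PS_pd'[OF Pa] by (auto simp: subset_mset.less_le)
    next
      case 2
      then have "mset (fst q) \<subset># mset xs" "\<exists>cw. PS r cw (snd q)" using W1 by auto
      moreover have "mset xs \<subset># mset (i # xs)" by (auto simp: subset_mset.less_le)
      ultimately show ?thesis using 2 PS_pd' by (metis fst_conv snd_conv subset_mset.less_trans)
    next
      case 3
      then have "mset (fst q) \<subset># mset xs" "\<exists>cw. PS r cw (snd q)" using W1 by auto
      then show ?thesis using 3 by simp
    qed
  next
    fix g :: "real^'n \<Rightarrow> real" and cg and y :: "real^'n" assume Pg: "PS r cg g" and y: "y \<in> ball 0 r"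
    define Fn where "Fn z = a z * pdl xs g z + (\<Sum>p\<leftarrow>W. snd p z * pdl (fst p) g z)" for z
    have "pdl (i # xs) (\<lambda>z. a z * g z) y = pd i Fn y"
      using pd_local[of "ball 0 r" y "pdl xs (\<lambda>z. a z * g z)" Fn i] W2[OF Pg] y
      by (simp add: Fn_def)
    also have "\<dots> = (pd i a y * pdl xs g y + a y * pdl (i # xs) g y) +
        (\<Sum>p\<leftarrow>W. pd i (snd p) y * pdl (fst p) g y + snd p y * pdl (i # fst p) g y)"
    proof (rule LD_pd)
      have L1: "LD i (\<lambda>z. a z * pdl xs g z) y (pd i a y * pdl xs g y + a y * pdl (i # xs) g y)"
        using LD_mult[OF LD_PS[OF Pa y] LD_PS[OF PS_pdl[OF Pg] y]] by simp
      have L2: "LD i (\<lambda>z. \<Sum>p\<leftarrow>W. snd p z * pdl (fst p) g z) y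
          (\<Sum>p\<leftarrow>W. pd i (snd p) y * pdl (fst p) g y + snd p y * pdl (i # fst p) g y)"
      proof (rule LD_sum_list)
        fix p assume "p \<in> set W"
        then obtain cw where "PS r cw (snd p)" using W1 by auto
        then show "LD i (\<lambda>z. snd p z * pdl (fst p) g z) y
            (pd i (snd p) y * pdl (fst p) g y + snd p y * pdl (i # fst p) g y)"
          using LD_mult[OF LD_PS[OF _ y] LD_PS[OF PS_pdl[OF Pg] y]] by simp
      qed
      show "LD i Fn y ((pd i a y * pdl xs g y + a y * pdl (i # xs) g y) +
        (\<Sum>p\<leftarrow>W. pd i (snd p) y * pdl (fst p) g y + snd p y * pdl (i # fst p) g y))"
        unfolding Fn_def[abs_def] by (rule LD_add[OF L1 L2])
    qed
    also have "\<dots> = a y * pdl (i # xs) g y + (\<Sum>p\<leftarrow>W'. snd p y * pdl (fst p) g y)"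
      by (simp add: W'_def sum_list_addf comp_def algebra_simps)
    finally show "pdl (i # xs) (\<lambda>z. a z * g z) y = a y * pdl (i # xs) g y + (\<Sum>p\<leftarrow>W'. snd p y * pdl (fst p) g y)" .
  qed
qed

lemma mono_zero:
  fixes I :: "'n::finite \<Rightarrow> nat"
  shows "monomial_at 0 I (0::real^'n) = (if mi_abs I = 0 then 1 else 0)"
proof (cases "mi_abs I = 0")
  case True
  then have "\<forall>l. I l = 0" unfolding mi_abs_def by simp
  then show ?thesis using True by (simp add: monomial_at_def)
next
  case False
  then obtain l where "I l \<noteq> 0" unfolding mi_abs_def by (meson sum_eq_0_iff finite)
  then have "(0::real) ^ I l = 0" by simp
  then have "monomial_at 0 I (0::real^'n) = 0" unfolding monomial_at_def
    by (intro prod_zero) auto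
  then show ?thesis using False by simp
qed

lemma mono_bound:
  fixes I :: "'n::finite \<Rightarrow> nat" and y :: "real^'n"
  assumes "\<And>l. \<bar>y$l\<bar> \<le> \<delta>"
  shows "\<bar>monomial_at 0 I y\<bar> \<le> \<delta> ^ mi_abs I"
proof -
  have "\<bar>monomial_at 0 I y\<bar> = (\<Prod>l\<in>UNIV. \<bar>y$l\<bar> ^ I l)"
    unfolding monomial_at_def abs_prod by (simp add: power_abs)
  also have "\<dots> \<le> (\<Prod>l\<in>UNIV. \<delta> ^ I l)"
    by (intro prod_mono conjI power_mono assms) simp_all
  also have "\<dots> = \<delta> ^ mi_abs I" unfolding mi_abs_def by (simp add: power_sum)
  finally show ?thesis .
qed

lemma PS_cont0:
  fixes f :: "real^'n::finite \<Rightarrow> real"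
  assumes PS: "PS r c f" and r: "r > 0" and e: "e > 0"
  shows "\<exists>\<delta>>0. \<forall>y. norm y < \<delta> \<longrightarrow> \<bar>f y - f 0\<bar> < e"
proof -
  define \<rho> where "\<rho> = r / (2 * real CARD('n))"
  have \<rho>: "\<rho> > 0" using r by (simp add: \<rho>_def)
  have \<rho>r: "\<rho> < r"
  proof -
    have "real CARD('n) \<ge> 1" by (simp add: Suc_le_eq)
    then have X: "2 * real CARD('n) > 1" by linarith
    have "r * 1 < r * (2 * real CARD('n))" using r X by (intro mult_strict_left_mono) auto
    then show ?thesis using X unfolding \<rho>_def by (simp add: divide_less_eq)
  qed
  define w :: "real^'n" where "w = (\<chi> l. \<rho>)"
  have "norm w \<le> (\<Sum>l\<in>UNIV. \<bar>w$l\<bar>)" by (rule norm_le_l1_cart)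
  also have "\<dots> = r / 2" using \<rho> r by (simp add: w_def \<rho>_def)
  finally have wb: "w \<in> ball 0 r" using r by simp
  have mw: "monomial_at 0 I w = \<rho> ^ mi_abs I" for I
    by (simp add: monomial_at_def w_def mi_abs_def power_sum)
  define G where "G I = \<bar>c I\<bar> * \<rho> ^ mi_abs I" for I
  have Gs: "G summable_on UNIV"
  proof -
    have "((\<lambda>I. c I * monomial_at 0 I w) has_sum f w) UNIV"
      using PS wb unfolding PS_def by (rule bspec)
    then have "(\<lambda>I. c I * monomial_at 0 I w) summable_on UNIV"
      unfolding summable_on_def by (rule exI)
    then have "(\<lambda>I. norm (c I * monomial_at 0 I w)) summable_on UNIV"
      by (rule summable_on_iff_abs_summable_on_real[THEN iffD1])
    moreover have "norm (c I * monomial_at 0 I w) = G I" for I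
      using \<rho> by (simp add: mw G_def abs_mult)
    ultimately show ?thesis by simp
  qed
  define T where "T = infsum G UNIV"
  have hG: "(G has_sum T) UNIV" using Gs T_def by simp
  have T0: "T \<ge> 0" unfolding T_def by (rule infsum_nonneg) (use \<rho> in \<open>simp add: G_def\<close>)
  define \<delta> where "\<delta> = min \<rho> (e * \<rho> / (2 * (T + 1)))"
  have \<delta>: "\<delta> > 0" using \<rho> e T0 by (simp add: \<delta>_def)
  have "\<bar>f y - f 0\<bar> < e" if y: "norm y < \<delta>" for y
  proof -
    have yb: "y \<in> ball 0 r" "(0::real^'n) \<in> ball 0 r"
      using y \<rho> r \<rho>r by (auto simp: \<delta>_def)
    have h1: "((\<lambda>I. c I * monomial_at 0 I y) has_sum f y) UNIV"
      using PS yb(1) unfolding PS_def by (rule bspec)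
    have h0: "((\<lambda>I. c I * monomial_at 0 I 0) has_sum f 0) UNIV"
      using PS yb(2) unfolding PS_def by (rule bspec)
    have hd: "((\<lambda>I. c I * monomial_at 0 I y + - (c I * monomial_at 0 I 0)) has_sum (f y + - f 0)) UNIV"
      by (intro has_sum_add h1) (simp add: has_sum_uminus h0)
    have comp: "\<bar>y$l\<bar> \<le> \<delta>" for l using component_le_norm_cart[of y l] y by simp
    have q: "\<delta> / \<rho> \<le> 1" "0 \<le> \<delta> / \<rho>" using \<rho> \<delta> by (auto simp: \<delta>_def)
    have bd: "norm (c I * monomial_at 0 I y + - (c I * monomial_at 0 I 0)) \<le> \<delta> / \<rho> * G I" for I
    proof (cases "mi_abs I = 0")
      case True
      then have "\<forall>l. I l = 0" unfolding mi_abs_def by simp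
      then have "monomial_at 0 I y = monomial_at 0 I 0" by (simp add: monomial_at_def)
      then show ?thesis using \<rho> \<delta> by (simp add: G_def)
    next
      case False
      have "norm (c I * monomial_at 0 I y + - (c I * monomial_at 0 I 0)) = \<bar>c I\<bar> * \<bar>monomial_at 0 I y\<bar>"
        using False by (simp add: mono_zero abs_mult)
      also have "\<dots> \<le> \<bar>c I\<bar> * \<delta> ^ mi_abs I"
        by (intro mult_left_mono mono_bound comp) simp
      also have "\<delta> ^ mi_abs I = (\<delta> / \<rho>) ^ mi_abs I * \<rho> ^ mi_abs I"
        using \<rho> by (simp add: power_divide)
      also have "(\<delta> / \<rho>) ^ mi_abs I \<le> \<delta> / \<rho>"
        using power_decreasing[of 1 "mi_abs I" "\<delta>/\<rho>"] False q by simp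
      then have "\<bar>c I\<bar> * ((\<delta> / \<rho>) ^ mi_abs I * \<rho> ^ mi_abs I) \<le> \<bar>c I\<bar> * ((\<delta> / \<rho>) * \<rho> ^ mi_abs I)"
        using \<rho> by (intro mult_left_mono mult_right_mono) simp_all
      finally show ?thesis by (simp add: G_def mult_ac)
    qed
    have "norm (f y + - f 0) \<le> \<delta> / \<rho> * T"
      by (rule norm_infsum_le[OF hd _ bd]) (rule has_sum_cmult_right[OF hG])
    also have "\<dots> \<le> (e / (2 * (T + 1))) * T"
    proof (intro mult_right_mono T0)
      have "\<delta> \<le> e * \<rho> / (2 * (T + 1))" by (simp add: \<delta>_def)
      then have "\<delta> / \<rho> \<le> (e * \<rho> / (2 * (T + 1))) / \<rho>" using \<rho> by (intro divide_right_mono) auto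
      then show "\<delta> / \<rho> \<le> e / (2 * (T + 1))" using \<rho> by simp
    qed
    also have "\<dots> < e" using e T0 by (simp add: field_simps add_nonneg_pos)
    finally show ?thesis by simp
  qed
  then show ?thesis using \<delta> by blast
qed

lemma rank1_rows:
  fixes A :: "real^'n::finite^'m::finite"
  assumes "rank A = 1" "A$k$k' \<noteq> 0"
  shows "A$k$k' *\<^sub>R (A$i) = A$i$k' *\<^sub>R (A$k)"
proof -
  have rk: "\<And>j. row j A = A $ j" by (simp add: row_def vec_eq_iff)
  have nz: "A$k \<noteq> 0" using assms(2) by auto
  have "A$i \<in> span {A$k}"
  proof (rule ccontr)
    assume ns: "A$i \<notin> span {A$k}"
    have ind: "independent {A$i, A$k}"
      by (rule independent_insertI[OF ns]) (simp add: nz)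
    have ne: "A$i \<noteq> A$k" using ns span_base[of "A$k" "{A$k}"] by auto
    have sub: "{A$i, A$k} \<subseteq> rows A" by (auto simp: rows_def rk)
    have "card {A$i, A$k} \<le> dim (rows A)" by (rule independent_card_le_dim[OF sub ind])
    then show False using ne assms(1) by (simp add: row_rank_def)
  qed
  then obtain t where t: "A$i = t *\<^sub>R A$k" by (auto simp: span_singleton)
  then have "A$i$k' = t * A$k$k'" by simp
  then show ?thesis using t by simp
qed

lemma exists_counts:
  fixes I :: "'n::finite \<Rightarrow> nat"
  shows "\<exists>xs. \<forall>l. count_list xs l = I l"
proof -
  define M where "M = (\<Sum>l\<in>UNIV. replicate_mset (I l) l)"
  have cM: "count M x = I x" for x
    unfolding M_def count_sum by (simp add: sum.delta)
  obtain xs where "mset xs = M" using ex_mset by blast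
  then show ?thesis using cM by (metis count_mset)
qed

lemma pdI_eq:
  assumes "PS r c f" "y \<in> ball 0 r" "\<And>l. count_list xs l = I l"
  shows "pdI I f y = pdl xs f y"
proof -
  have "\<forall>l. count_list (SOME xs. \<forall>i. count_list xs i = I i) l = I l"
    using someI_ex[OF exists_counts[of I]] by simp
  then show ?thesis unfolding pdI_def using pdl_perm[OF assms(1) _ assms(2)] assms(3) by metis
qed

lemma mi_abs_counts: "mi_abs (\<lambda>l. count_list xs l) = length (xs :: 'n::finite list)"
  unfolding mi_abs_def using sum_count_set[of xs UNIV] by simp

lemma pdl_snoc: "pdl (xs @ [i]) f = pdl xs (pd i f)"
  by (induction xs) auto

lemma vec_sum_list_nth: "(\<Sum>p\<leftarrow>W. f p) $ j = (\<Sum>p\<leftarrow>W. f p $ j)"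
  by (induction W) auto

lemma span_sum_list: "(\<And>p. p \<in> set W \<Longrightarrow> f p \<in> span S) \<Longrightarrow> (\<Sum>p\<leftarrow>W. f p) \<in> span S"
  by (induction W) (auto intro: span_add span_zero)

theorem lemma10p2:
  fixes u :: "real^'n \<Rightarrow> real" and k :: 'n
  assumes "real_analytic_near u 0"
    and "\<exists>U. open U \<and> 0 \<in> U \<and> (\<forall>x\<in>U. rank (hessian u x) = 1)"
    and "pd k (pd k u) 0 \<noteq> 0"
  shows "\<exists>V. open V \<and> 0 \<in> V \<and>
           (\<forall>x\<in>V. \<forall>I :: 'n \<Rightarrow> nat.
              grad_pdI I u x \<in> span {grad_pdI ((\<lambda>_. 0)(k := m)) u x | m. m \<le> mi_abs I})"
proof -
  have "real_analytic_at u 0" using assms(1) unfolding real_analytic_near_def by blast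
  then obtain r c where r: "r > 0" and PSu: "PS r c u"
    unfolding real_analytic_at_def PS_def by blast
  obtain U where U: "open U" "0 \<in> U" "\<And>x. x \<in> U \<Longrightarrow> rank (hessian u x) = 1"
    using assms(2) by blast
  define A where "A = pd k (pd k u)"
  have PSA: "PS r (dc k (dc k c)) A" unfolding A_def by (intro PS_pd' PSu)
  have A0: "\<bar>A 0\<bar> > 0" using assms(3) by (simp add: A_def)
  obtain \<delta> where \<delta>: "\<delta> > 0" "\<And>y. norm y < \<delta> \<Longrightarrow> \<bar>A y - A 0\<bar> < \<bar>A 0\<bar>"
    using PS_cont0[OF PSA r A0] by blast
  define V where "V = ball 0 r \<inter> U \<inter> ball 0 \<delta>"
  have oV: "open V" unfolding V_def using U(1) by auto
  have V0: "0 \<in> V" unfolding V_def using U(2) r \<delta>(1) by auto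
  have Vb: "z \<in> ball 0 r" if "z \<in> V" for z using that by (simp add: V_def)
  have Anz: "A z \<noteq> 0" if "z \<in> V" for z
  proof
    assume "A z = 0"
    moreover have "norm z < \<delta>" using that by (simp add: V_def)
    ultimately show False using \<delta>(2)[of z] by simp
  qed
  have rel: "A z * pd i (pd j u) z = pd i (pd k u) z * pd k (pd j u) z" if "z \<in> V" for z i j
  proof -
    have "rank (hessian u z) = 1" using U(3) that by (simp add: V_def)
    moreover have "hessian u z $ k $ k \<noteq> 0" using Anz[OF that] by (simp add: hessian_def A_def)
    ultimately have "hessian u z $ k $ k *\<^sub>R (hessian u z $ i) = hessian u z $ i $ k *\<^sub>R (hessian u z $ k)"
      by (rule rank1_rows)
    then have "(hessian u z $ k $ k *\<^sub>R (hessian u z $ i)) $ j = (hessian u z $ i $ k *\<^sub>R (hessian u z $ k)) $ j"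
      by simp
    then show ?thesis by (simp add: hessian_def A_def)
  qed
  show ?thesis
  proof (intro exI[of _ V] conjI oV V0 ballI allI)
    fix x and I :: "'n \<Rightarrow> nat" assume x: "x \<in> V"
    have xb: "x \<in> ball 0 r" using Vb[OF x] .
    define S where "S m = {grad_pdI ((\<lambda>_. 0)(k := m')) u x | m'. m' \<le> m}" for m
    have Smono: "span (S m) \<subseteq> span (S m')" if "m \<le> m'" for m m'
      using that by (intro span_mono) (auto simp: S_def)
    define gv where "gv zs = (\<chi> j. pdl zs (pd j u) x)" for zs
    have gv_eq: "gv zs = grad_pdI (\<lambda>l. count_list zs l) u x" for zs
      unfolding gv_def grad_pdI_def
      using pdI_eq[OF PS_pd'[OF PSu] xb, of zs] by simp
    have main: "\<forall>K. mi_abs K = N \<longrightarrow> grad_pdI K u x \<in> span (S N)" for N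
    proof (induction N rule: less_induct)
      case (less N)
      note outerIH = less.IH
      have "\<forall>K. mi_abs K = N \<longrightarrow> N - K k = d \<longrightarrow> grad_pdI K u x \<in> span (S N)" for d
      proof (induction d rule: less_induct)
        case (less d)
        show ?case
        proof (intro allI impI)
          fix K assume KN: "mi_abs K = N" and Kd: "N - K k = d"
          have msplit: "mi_abs K = K k + (\<Sum>l\<in>UNIV-{k}. K l)"
            unfolding mi_abs_def by (simp add: sum.remove)
          show "grad_pdI K u x \<in> span (S N)"
          proof (cases "\<exists>i. i \<noteq> k \<and> K i \<noteq> 0")
            case False
            then have "(\<Sum>l\<in>UNIV-{k}. K l) = 0" by auto
            then have "K k = N" using KN msplit by simp
            then have "K = (\<lambda>_. 0)(k := N)" using False by (auto simp: fun_eq_iff)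
            then show ?thesis by (auto simp: S_def intro!: span_base)
          next
            case True
            then obtain i where i: "i \<noteq> k" "K i \<noteq> 0" by blast
            define J where "J = K(i := K i - 1)"
            obtain xs where xs: "\<And>l. count_list xs l = J l" using exists_counts[of J] by blast
            have cK: "(\<lambda>l. count_list (xs @ [i]) l) = K"
              using i by (auto simp: fun_eq_iff xs J_def)
            have lenN: "length xs + 1 = N"
              using mi_abs_counts[of "xs @ [i]"] cK KN by simp
            have "K i \<le> (\<Sum>l\<in>UNIV-{k}. K l)"
              using i by (intro member_le_sum) auto
            then have Kk: "K k < N" using KN msplit i by simp
            have IHo: "gv (zs @ [l]) \<in> span (S N)" if "length zs < length xs" for zs l
            proof -
              have m: "mi_abs (\<lambda>l'. count_list (zs @ [l]) l') = length zs + 1"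
                using mi_abs_counts[of "zs @ [l]"] by simp
              have "grad_pdI (\<lambda>l'. count_list (zs @ [l]) l') u x \<in> span (S (length zs + 1))"
                using outerIH[of "length zs + 1"] that lenN m by auto
              then show ?thesis using Smono[of "length zs + 1" N] that lenN gv_eq by auto
            qed
            have IHi: "gv (xs @ [k]) \<in> span (S N)"
            proof -
              have m: "mi_abs (\<lambda>l'. count_list (xs @ [k]) l') = N"
                using lenN mi_abs_counts[of "xs @ [k]"] by simp
              have ck: "count_list (xs @ [k]) k = K k + 1" using i by (simp add: xs J_def)
              have "N - count_list (xs @ [k]) k < d" using ck Kd Kk by simp
              then show ?thesis using less.IH m gv_eq by auto
            qed
            define B where "B = pd i (pd k u)"
            have PSB: "PS r (dc i (dc k c)) B" unfolding B_def by (intro PS_pd' PSu)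
            obtain W1 where W1a: "\<forall>p\<in>set W1. mset (fst p) \<subset># mset xs \<and> (\<exists>cw. PS r cw (snd p))"
              and W1b: "\<And>g cg y. PS r cg g \<Longrightarrow> y\<in>ball 0 r \<Longrightarrow>
                pdl xs (\<lambda>z. A z * g z) y = A y * pdl xs g y + (\<Sum>p\<leftarrow>W1. snd p y * pdl (fst p) g y)"
              using leibniz[OF PSA, of xs] by blast
            obtain W2 where W2a: "\<forall>p\<in>set W2. mset (fst p) \<subset># mset xs \<and> (\<exists>cw. PS r cw (snd p))"
              and W2b: "\<And>g cg y. PS r cg g \<Longrightarrow> y\<in>ball 0 r \<Longrightarrow>
                pdl xs (\<lambda>z. B z * g z) y = B y * pdl xs g y + (\<Sum>p\<leftarrow>W2. snd p y * pdl (fst p) g y)"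
              using leibniz[OF PSB, of xs] by blast
            have eqj: "A x * pdl xs (pd i (pd j u)) x + (\<Sum>p\<leftarrow>W1. snd p x * pdl (fst p) (pd i (pd j u)) x)
               = B x * pdl xs (pd k (pd j u)) x + (\<Sum>p\<leftarrow>W2. snd p x * pdl (fst p) (pd k (pd j u)) x)" for j
            proof -
              have P1: "PS r (dc i (dc j c)) (pd i (pd j u))" by (intro PS_pd' PSu)
              have P2: "PS r (dc k (dc j c)) (pd k (pd j u))" by (intro PS_pd' PSu)
              have "pdl xs (\<lambda>z. A z * pd i (pd j u) z) x = pdl xs (\<lambda>z. B z * pd k (pd j u) z) x"
                by (rule pdl_local[OF oV _ x]) (simp add: rel B_def)
              then show ?thesis using W1b[OF P1 xb] W2b[OF P2 xb] by simp
            qed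
            have veq: "A x *\<^sub>R gv (xs @ [i]) + (\<Sum>p\<leftarrow>W1. snd p x *\<^sub>R gv (fst p @ [i]))
                = B x *\<^sub>R gv (xs @ [k]) + (\<Sum>p\<leftarrow>W2. snd p x *\<^sub>R gv (fst p @ [k]))"
              by (simp add: vec_eq_iff gv_def vec_sum_list_nth pdl_snoc eqj)
            have len: "length (fst p) < length xs" if "p \<in> set W1 \<union> set W2" for p
              using that W1a W2a mset_subset_size by fastforce
            have s1: "(\<Sum>p\<leftarrow>W1. snd p x *\<^sub>R gv (fst p @ [i])) \<in> span (S N)"
              by (rule span_sum_list, rule span_mul, rule IHo) (use len in auto)
            have s2: "(\<Sum>p\<leftarrow>W2. snd p x *\<^sub>R gv (fst p @ [k])) \<in> span (S N)"
              by (rule span_sum_list, rule span_mul, rule IHo) (use len in auto)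
            have "gv (xs @ [i]) = (1 / A x) *\<^sub>R (B x *\<^sub>R gv (xs @ [k]) + (\<Sum>p\<leftarrow>W2. snd p x *\<^sub>R gv (fst p @ [k]))
                   - (\<Sum>p\<leftarrow>W1. snd p x *\<^sub>R gv (fst p @ [i])))"
              using Anz[OF x] by (simp add: veq[symmetric])
            also have "\<dots> \<in> span (S N)"
              by (intro span_mul span_diff span_add s1 s2 IHi)
            finally show ?thesis using gv_eq[of "xs @ [i]"] cK by simp
          qed
        qed
      qed
      then show ?case by blast
    qed
    show "grad_pdI I u x \<in> span {grad_pdI ((\<lambda>_. 0)(k := m)) u x | m. m \<le> mi_abs I}"
      using main[of "mi_abs I"] unfolding S_def by blast
  qed
qed

end
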